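(* For any $a,b\ge0$, $$\lim_{n\to\infty}\Biggl(\sum_{i=0}^{\lfloor n/2\rfloor}\binom nia^ib^{n-i}\Biggr)^{1/n}=\begin{cases}a+b&\text{if }a\le b,\\ 2\sqrt{ab}&\text{if }a\ge b.\end{cases}$$
   Context: The convention $0^0=1$ is used in the terms $a^ib^{n-i}$. *)

theory Defs
  imports "HOL-Analysis.Analysis"
begin

end

theory Submission
  imports Defs
begin

lemma squeeze_root:
  fixes S :: "nat \<Rightarrow> real" and L c :: real
  assumes L: "L \<ge> 0" and c: "c > 0"
    and b: "\<And>n. n \<ge> 1 \<Longrightarrow> c / (2 * real n) * L ^ n \<le> S n \<and> S n \<le> L ^ n"
  shows "(\<lambda>n. root n (S n)) \<longlonglongrightarrow> L"
proof (rule tendsto_sandwich)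
  have lim: "(\<lambda>n. root n (c/2) / root n (real n) * L) \<longlonglongrightarrow> 1 / 1 * L"
    by (intro tendsto_intros LIMSEQ_root_const LIMSEQ_root) (use c in auto)
  have eq: "root n (c / (2 * real n) * L ^ n) = root n (c/2) / root n (real n) * L" if "n \<ge> 1" for n
  proof -
    have "c / (2 * real n) * L ^ n = (c/2) / real n * L ^ n" by simp
    then show ?thesis using that L
      by (simp add: real_root_mult real_root_divide real_root_power_cancel)
  qed
  show "\<forall>\<^sub>F n in sequentially. root n (c/2) / root n (real n) * L \<le> root n (S n)"
    unfolding eventually_sequentially
  proof (intro exI allI impI)
    fix n :: nat assume n: "n \<ge> 1"
    have "root n (c / (2 * real n) * L ^ n) \<le> root n (S n)"
      using b[OF n] n by (subst real_root_le_iff) auto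
    then show "root n (c/2) / root n (real n) * L \<le> root n (S n)" using eq[OF n] by simp
  qed
  show "\<forall>\<^sub>F n in sequentially. root n (S n) \<le> L"
    unfolding eventually_sequentially
  proof (intro exI allI impI)
    fix n :: nat assume n: "n \<ge> 1"
    have "root n (S n) \<le> root n (L ^ n)"
      using b[OF n] n by (subst real_root_le_iff) auto
    then show "root n (S n) \<le> L" using n L by (simp add: real_root_power_cancel)
  qed
  show "(\<lambda>n. root n (c/2) / root n (real n) * L) \<longlonglongrightarrow> L" using lim by simp
  show "(\<lambda>n. L) \<longlonglongrightarrow> L" by simp
qed

lemma case_le:
  fixes a b :: real and n :: nat
  assumes a: "a \<ge> 0" and ab: "a \<le> b"
  defines "f \<equiv> \<lambda>k. real (n choose k) * a ^ k * b ^ (n - k)"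
  shows "sum f {0..n div 2} \<le> (a+b)^n \<and> (a+b)^n \<le> 2 * sum f {0..n div 2}"
proof -
  have fnn: "f k \<ge> 0" for k using a ab unfolding f_def by auto
  have full: "(a+b)^n = sum f {..n}" unfolding f_def by (simp add: binomial_ring)
  have split: "{..n} = {0..n div 2} \<union> {n div 2<..n}" by auto
  have sp: "sum f {..n} = sum f {0..n div 2} + sum f {n div 2<..n}"
    unfolding split by (subst sum.union_disjoint) auto
  have up: "sum f {0..n div 2} \<le> (a+b)^n"
    using sp full fnn by (simp add: sum_nonneg)
  have tw: "f k \<le> f (n - k)" if k: "k \<in> {n div 2<..n}" for k
  proof -
    from k have kn: "k \<le> n" and nk: "n - k \<le> k" by auto
    define d where "d = k - (n - k)"
    have kd: "k = (n - k) + d" using nk d_def by simp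
    have "a ^ k * b ^ (n - k) = a ^ (n-k) * b ^ (n-k) * a ^ d"
      by (subst kd) (simp add: power_add)
    also have "\<dots> \<le> a ^ (n-k) * b ^ (n-k) * b ^ d"
      using a ab by (intro mult_left_mono power_mono) auto
    also have "\<dots> = a ^ (n-k) * b ^ (n - (n - k))"
    proof -
      have "b ^ (n-k) * b ^ d = b ^ k" using kd by (metis power_add)
      then show ?thesis using kn by (simp add: mult.assoc)
    qed
    finally have "a ^ k * b ^ (n - k) \<le> a ^ (n-k) * b ^ (n - (n - k))" .
    moreover have "n choose k = n choose (n - k)" using binomial_symmetric[OF kn] .
    ultimately show ?thesis unfolding f_def
      by (simp add: mult.assoc mult_left_mono)
  qed
  have "sum f {n div 2<..n} \<le> sum (\<lambda>k. f (n - k)) {n div 2<..n}"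
    by (intro sum_mono tw)
  also have "\<dots> = sum f {0..<n - n div 2}"
    by (rule sum.reindex_bij_witness[of _ "\<lambda>j. n - j" "\<lambda>k. n - k"]) auto
  also have "\<dots> \<le> sum f {0..n div 2}"
    by (intro sum_mono2) (auto simp: fnn)
  finally show ?thesis using up sp full by simp
qed

lemma case_gt:
  fixes a b :: real and n :: nat
  assumes b: "b > 0" and ab: "b < a" and n: "n \<ge> 1"
  defines "f \<equiv> \<lambda>k. real (n choose k) * a ^ k * b ^ (n - k)"
  shows "(b / sqrt (a*b)) / (2 * real n) * (2 * sqrt (a*b))^n \<le> sum f {0..n div 2}
     \<and> sum f {0..n div 2} \<le> (2 * sqrt (a*b))^n"
proof -
  define s where "s = sqrt (a*b)"
  have a: "a > 0" using b ab by simp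
  have s0: "s > 0" unfolding s_def using a b by simp
  have ss: "s * s = a * b" unfolding s_def using a b by (simp flip: power2_eq_square)
  have bs: "b \<le> s" unfolding s_def using a b ab
  proof -
    have "b * b \<le> a * b" using ab b by (intro mult_right_mono) auto
    then have "sqrt (b*b) \<le> sqrt (a*b)" by (rule real_sqrt_le_mono)
    then show "b \<le> sqrt (a*b)" using b by simp
  qed
  have fnn: "f k \<ge> 0" for k using a b unfolding f_def by auto
  have key: "a ^ i * b ^ (n - i) = s ^ (2*i) * b ^ (n - 2*i)" if "i \<le> n div 2" for i
  proof -
    have e: "n - i = i + (n - 2*i)" using that by auto
    have "a ^ i * b ^ (n - i) = (a*b)^i * b ^ (n - 2*i)"
      by (subst e) (simp add: power_add power_mult_distrib)
    also have "(a*b)^i = s^(2*i)" by (simp add: power_mult ss[symmetric] power2_eq_square)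
    finally show ?thesis .
  qed
  have tb: "a ^ i * b ^ (n - i) \<le> s ^ n" if "i \<le> n div 2" for i
  proof -
    have "s ^ (2*i) * b ^ (n - 2*i) \<le> s ^ (2*i) * s ^ (n - 2*i)"
      using bs b s0 by (intro mult_left_mono power_mono) auto
    also have "\<dots> = s ^ n" using that by (simp flip: power_add)
    finally show ?thesis using key[OF that] by simp
  qed
  have "sum f {0..n div 2} \<le> (\<Sum>i=0..n div 2. real (n choose i) * s ^ n)"
    unfolding f_def using tb by (intro sum_mono) (simp add: mult.assoc mult_left_mono)
  also have "\<dots> \<le> (\<Sum>i\<le>n. real (n choose i) * s ^ n)"
    using s0 by (intro sum_mono2) auto
  also have "\<dots> = 2 ^ n * s ^ n"
    by (simp flip: sum_distrib_right of_nat_sum add: choose_row_sum)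
  finally have up: "sum f {0..n div 2} \<le> (2 * s)^n" by (simp add: power_mult_distrib)
  define m where "m = n div 2"
  have lowb: "2 ^ n \<le> real (n+1) * real (n choose m)"
  proof -
    have "(2::real) ^ n = (\<Sum>k\<le>n. real (n choose k))"
      by (simp flip: of_nat_sum add: choose_row_sum)
    also have "\<dots> \<le> (\<Sum>k\<le>n. real (n choose m))"
      unfolding m_def by (intro sum_mono) (simp add: binomial_maximum)
    finally show ?thesis by simp
  qed
  have lowb2: "2 ^ n / (2 * real n) \<le> real (n choose m)"
  proof -
    have "real (n+1) \<le> 2 * real n" using n by simp
    then have "2 ^ n \<le> 2 * real n * real (n choose m)"
      using lowb by (meson mult_right_mono of_nat_0_le_iff order_trans)
    then show ?thesis using n by (simp add: field_simps)
  qed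
  have tm: "b / s * s ^ n \<le> a ^ m * b ^ (n - m)"
  proof -
    have "b / s * s ^ n \<le> s ^ (2*m) * b ^ (n - 2*m)"
    proof (cases "even n")
      case True
      then have "n = 2*m" unfolding m_def by simp
      then show ?thesis using bs s0 by (simp add: field_simps)
    next
      case False
      then have e: "n = 2*m + 1" unfolding m_def by presburger
      have "b / s * s ^ n = s ^ (2*m) * b" using s0 by (subst e) (simp add: field_simps)
      then show ?thesis by (subst (2) e) simp
    qed
    then show ?thesis using key[of m] unfolding m_def by simp
  qed
  have "(b / s) / (2 * real n) * (2 * s)^n = (2 ^ n / (2 * real n)) * (b / s * s ^ n)"
    by (simp add: power_mult_distrib mult_ac)
  also have "\<dots> \<le> real (n choose m) * (a ^ m * b ^ (n - m))"
    by (rule mult_mono[OF lowb2 tm]) (use s0 b a in auto)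
  also have "\<dots> = f m" unfolding f_def by simp
  also have "\<dots> \<le> sum f {0..n div 2}"
    unfolding m_def by (intro member_le_sum fnn) auto
  finally show ?thesis using up unfolding s_def by simp
qed

theorem lemmaA5:
  fixes a b :: real
  assumes "a \<ge> 0" and "b \<ge> 0"
  shows "(\<lambda>n. root n (\<Sum>i=0..n div 2. real (n choose i) * a ^ i * b ^ (n - i)))
           \<longlonglongrightarrow> (if a \<le> b then a + b else 2 * sqrt (a * b))"
proof (cases "a \<le> b")
  case True
  have "(\<lambda>n. root n (\<Sum>i=0..n div 2. real (n choose i) * a ^ i * b ^ (n - i))) \<longlonglongrightarrow> a + b"
  proof (rule squeeze_root[where c=1])
    fix n :: nat assume n: "n \<ge> 1"
    note h = case_le[OF assms(1) True, of n]
    have p: "(a+b)^n \<ge> 0" using assms by simp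
    have "1 / (2 * real n) * (a+b)^n \<le> 1/2 * (a+b)^n"
      using n p by (intro mult_right_mono) (auto simp: field_simps)
    then show "1 / (2 * real n) * (a + b) ^ n \<le> (\<Sum>i=0..n div 2. real (n choose i) * a ^ i * b ^ (n - i)) \<and>
         (\<Sum>i=0..n div 2. real (n choose i) * a ^ i * b ^ (n - i)) \<le> (a + b) ^ n"
      using h by linarith
  qed (use assms in auto)
  then show ?thesis using True by simp
next
  case False
  show ?thesis
  proof (cases "b = 0")
    case True
    have "(\<lambda>n. root n (\<Sum>i=0..n div 2. real (n choose i) * a ^ i * b ^ (n - i))) \<longlonglongrightarrow> 0"
    proof (rule squeeze_root[where c=1])
      fix n :: nat assume n: "n \<ge> 1"
      have "(\<Sum>i=0..n div 2. real (n choose i) * a ^ i * b ^ (n - i)) = 0"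
        using n True by (intro sum.neutral) auto
      then show "1 / (2 * real n) * 0 ^ n \<le> (\<Sum>i=0..n div 2. real (n choose i) * a ^ i * b ^ (n - i)) \<and>
         (\<Sum>i=0..n div 2. real (n choose i) * a ^ i * b ^ (n - i)) \<le> 0 ^ n"
        using n by (simp add: power_0_left)
    qed auto
    then show ?thesis using True False by simp
  next
    case b0: False
    then have bp: "b > 0" using assms by simp
    have ab: "b < a" using False by simp
    have "(\<lambda>n. root n (\<Sum>i=0..n div 2. real (n choose i) * a ^ i * b ^ (n - i))) \<longlonglongrightarrow> 2 * sqrt (a*b)"
    proof (rule squeeze_root[where c="b / sqrt (a*b)"])
      fix n :: nat assume n: "n \<ge> 1"
      show "b / sqrt (a * b) / (2 * real n) * (2 * sqrt (a * b)) ^ n \<le> (\<Sum>i=0..n div 2. real (n choose i) * a ^ i * b ^ (n - i)) \<and>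
         (\<Sum>i=0..n div 2. real (n choose i) * a ^ i * b ^ (n - i)) \<le> (2 * sqrt (a * b)) ^ n"
        using case_gt[OF bp ab n] by simp
    qed (use bp ab in auto)
    then show ?thesis using False by simp
  qed
qed

end
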